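(* For all integers $n\ge 0$ and $m>nt$, \[ \mathcal{L}^{(t)}\big(U^{(t)}_m(x)\,U^{(t)}_n(x)\big)=0 \quad\text{and}\quad \mathcal{L}^{(t)}\big(U^{(t)}_{nt}(x)\,U^{(t)}_n(x)\big)=1 . \]
   Context: Fix an integer $t\ge1$. For $n\ge 0$ let $P_n$ be the path graph with vertices $1,\dots,n$ and edges $\{i,i+1\}$. A $t$-path in $P_n$ is a set of $t+1$ consecutive vertices $\{i,\dots,i+t\}$. Define $U^{(t)}_n(x)=\sum_{F}(-1)^{|F|}x^{\,n-(t+1)|F|}$, the sum over all families $F$ of pairwise vertex-disjoint $t$-paths in $P_n$ ($U^{(t)}_0=1$). Let $\mu^{(t)}_m$ be the number of noncrossing set partitions of $[m]$ all of whose blocks have size $t+1$ ($\mu^{(t)}_0=1$; noncrossing means no $a<b<c<d$ with $a,c$ in one block and $b,d$ in another), and let $\mathcal{L}^{(t)}$ be the linear functional on polynomials with $\mathcal{L}^{(t)}(x^m)=\mu^{(t)}_m$. *)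

theory Defs
  imports "HOL-Computational_Algebra.Polynomial" "HOL-Library.Disjoint_Sets"
begin

text \<open>The t-paths in the path graph P_n on vertices 1..n: sets of t+1 consecutive vertices.\<close>
definition tpaths :: "nat \<Rightarrow> nat \<Rightarrow> nat set set" where
  "tpaths t n = {{i..i+t} | i. 1 \<le> i \<and> i + t \<le> n}"

definition tpath_families :: "nat \<Rightarrow> nat \<Rightarrow> nat set set set" where
  "tpath_families t n = {F. F \<subseteq> tpaths t n \<and> disjoint F}"

definition U :: "nat \<Rightarrow> nat \<Rightarrow> int poly" where
  "U t n = (\<Sum>F\<in>tpath_families t n. monom ((-1) ^ card F) (n - (t + 1) * card F))"

definition noncrossing :: "nat set set \<Rightarrow> bool" where
  "noncrossing P \<longleftrightarrow> \<not> (\<exists>B\<in>P. \<exists>B'\<in>P. B \<noteq> B' \<and>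
     (\<exists>a b c d. a < b \<and> b < c \<and> c < d \<and> a \<in> B \<and> c \<in> B \<and> b \<in> B' \<and> d \<in> B'))"

definition mu :: "nat \<Rightarrow> nat \<Rightarrow> nat" where
  "mu t m = card {P. partition_on {1..m} P \<and> (\<forall>B\<in>P. card B = t + 1) \<and> noncrossing P}"

definition L :: "nat \<Rightarrow> int poly \<Rightarrow> int" where
  "L t p = (\<Sum>k\<le>degree p. coeff p k * int (mu t k))"

end

theory Submission
  imports Defs
begin



lemma L_bound:
  assumes "degree p \<le> N"
  shows "L t p = (\<Sum>k\<le>N. coeff p k * int (mu t k))"
proof -
  have "(\<Sum>k\<le>N. coeff p k * int (mu t k)) = (\<Sum>k\<le>degree p. coeff p k * int (mu t k))"
  proof (rule sum.mono_neutral_right)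
    show "\<forall>i\<in>{..N} - {..degree p}. coeff p i * int (mu t i) = 0"
      by (auto simp: coeff_eq_0)
  qed (use assms in auto)
  thus ?thesis by (simp add: L_def)
qed

lemma L_add: "L t (p + q) = L t p + L t q"
proof -
  let ?N = "max (degree p) (degree q)"
  have "L t (p + q) = (\<Sum>k\<le>?N. coeff (p+q) k * int (mu t k))"
    by (rule L_bound) (simp add: degree_add_le)
  also have "\<dots> = (\<Sum>k\<le>?N. coeff p k * int (mu t k)) + (\<Sum>k\<le>?N. coeff q k * int (mu t k))"
    by (simp add: sum.distrib algebra_simps)
  also have "\<dots> = L t p + L t q"
    by (simp add: L_bound[symmetric])
  finally show ?thesis .
qed

lemma L_smult: "L t (smult c p) = c * L t p"
proof -
  have "L t (smult c p) = (\<Sum>k\<le>degree p. coeff (smult c p) k * int (mu t k))"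
    by (rule L_bound) (simp add: degree_smult_le)
  thus ?thesis by (simp add: L_def sum_distrib_left algebra_simps)
qed

lemma L_0[simp]: "L t 0 = 0" by (simp add: L_def)

lemma L_minus: "L t (- p) = - L t p"
  using L_smult[of t "-1" p] by simp

lemma L_diff: "L t (p - q) = L t p - L t q"
  using L_add[of t p "-q"] L_minus[of t q] by simp

lemma L_sum: "L t (sum f A) = (\<Sum>a\<in>A. L t (f a))"
  by (induction A rule: infinite_finite_induct) (auto simp: L_add)

lemma L_monom: "L t (monom c k) = c * int (mu t k)"
proof -
  have "L t (monom c k) = (\<Sum>j\<le>k. coeff (monom c k) j * int (mu t j))"
    by (rule L_bound) (simp add: degree_monom_le)
  also have "\<dots> = c * int (mu t k)"
    by (simp add: coeff_monom if_distrib[where f="\<lambda>x. x * _"] sum.delta cong: if_cong)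
  finally show ?thesis .
qed




lemma tpaths_alt: "tpaths t n = (\<lambda>i. {i..i+t}) ` {i. 1 \<le> i \<and> i + t \<le> n}"
  by (auto simp: tpaths_def)

lemma finite_tpaths: "finite (tpaths t n)"
  unfolding tpaths_alt by (rule finite_imageI) (auto intro: finite_subset[of _ "{..n}"])

lemma tpaths_mono: "n \<le> n' \<Longrightarrow> tpaths t n \<subseteq> tpaths t n'"
  by (auto simp: tpaths_def)

lemma tpaths_sub: "q \<in> tpaths t n \<Longrightarrow> q \<subseteq> {1..n}"
  by (auto simp: tpaths_def)

lemma tpaths_card: "q \<in> tpaths t n \<Longrightarrow> card q = t + 1"
  by (auto simp: tpaths_def)

lemma fam_finite: "F \<in> tpath_families t n \<Longrightarrow> finite F"
  by (auto simp: tpath_families_def intro: finite_subset[OF _ finite_tpaths])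

lemma fam_card_Union:
  assumes "F \<in> tpath_families t n"
  shows "card (\<Union>F) = (t+1) * card F" and "\<Union>F \<subseteq> {1..n}"
proof -
  have fin: "finite F" using fam_finite[OF assms] .
  have sub: "F \<subseteq> tpaths t n" and dis: "disjoint F" using assms by (auto simp: tpath_families_def)
  have "card (\<Union>F) = (\<Sum>q\<in>F. card q)"
    by (rule card_Union_disjoint[OF dis]) (use sub in \<open>auto simp: tpaths_def\<close>)
  also have "\<dots> = (\<Sum>q\<in>F. t + 1)" using sub by (intro sum.cong) (auto simp: tpaths_card)
  finally show "card (\<Union>F) = (t+1) * card F" by simp
  show "\<Union>F \<subseteq> {1..n}" using sub tpaths_sub by blast
qed

lemma fam_bound:
  assumes "F \<in> tpath_families t n"
  shows "(t+1) * card F \<le> n"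
proof -
  have "card (\<Union>F) \<le> card {1..n}" by (rule card_mono) (use fam_card_Union[OF assms] in auto)
  thus ?thesis using fam_card_Union[OF assms] by simp
qed

lemma fam_small: "n \<le> t \<Longrightarrow> tpath_families t n = {{}}"
proof -
  assume "n \<le> t"
  hence "tpaths t n = {}" by (auto simp: tpaths_def)
  thus ?thesis by (auto simp: tpath_families_def)
qed

lemma U_small: "n \<le> t \<Longrightarrow> U t n = monom 1 n"
  by (simp add: U_def fam_small)

lemma U_0: "U t 0 = 1"
  using U_small[of 0 t] by (simp add: monom_0 one_pCons)

lemma fam_split:
  assumes "m \<ge> t + 1"
  defines "p \<equiv> {m-t..m}"
  shows "tpath_families t m = tpath_families t (m-1) \<union> insert p ` tpath_families t (m-t-1)"
    and "p \<notin> tpaths t (m-1)" and "p \<notin> tpaths t (m-t-1)"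
proof -
  show pn1: "p \<notin> tpaths t (m-1)" using assms by (auto simp: tpaths_def p_def)
  show pn2: "p \<notin> tpaths t (m-t-1)" using assms by (auto simp: tpaths_def p_def)
  have pin: "p \<in> tpaths t m" using assms unfolding tpaths_def p_def
    by (auto intro!: exI[of _ "m-t"])
  show "tpath_families t m = tpath_families t (m-1) \<union> insert p ` tpath_families t (m-t-1)"
  proof (intro equalityI subsetI)
    fix F assume F: "F \<in> tpath_families t m"
    hence sub: "F \<subseteq> tpaths t m" and dis: "disjoint F" by (auto simp: tpath_families_def)
    show "F \<in> tpath_families t (m-1) \<union> insert p ` tpath_families t (m-t-1)"
    proof (cases "p \<in> F")
      case True
      have "F - {p} \<subseteq> tpaths t (m-t-1)"
      proof
        fix q assume q: "q \<in> F - {p}"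
        then obtain i where i: "q = {i..i+t}" "1 \<le> i" "i + t \<le> m" using sub by (auto simp: tpaths_def)
        have "q \<inter> p = {}" using dis q True by (auto simp: disjoint_def)
        hence "i + t < m - t" using i unfolding p_def by (auto simp: disjoint_iff)
        thus "q \<in> tpaths t (m-t-1)" using i by (auto simp: tpaths_def)
      qed
      moreover have "disjoint (F - {p})" using dis by (auto simp: disjoint_def)
      ultimately have "F - {p} \<in> tpath_families t (m-t-1)" by (auto simp: tpath_families_def)
      moreover have "F = insert p (F - {p})" using True by auto
      ultimately show ?thesis by blast
    next
      case False
      have "F \<subseteq> tpaths t (m-1)"
      proof
        fix q assume q: "q \<in> F"
        then obtain i where i: "q = {i..i+t}" "1 \<le> i" "i + t \<le> m" using sub by (auto simp: tpaths_def)
        have "i + t \<noteq> m" using False q i unfolding p_def by auto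
        thus "q \<in> tpaths t (m-1)" using i by (auto simp: tpaths_def)
      qed
      thus ?thesis using dis by (auto simp: tpath_families_def)
    qed
  next
    fix F assume "F \<in> tpath_families t (m-1) \<union> insert p ` tpath_families t (m-t-1)"
    thus "F \<in> tpath_families t m"
    proof
      assume "F \<in> tpath_families t (m-1)"
      thus ?thesis using tpaths_mono[of "m-1" m t] by (auto simp: tpath_families_def)
    next
      assume "F \<in> insert p ` tpath_families t (m-t-1)"
      then obtain G where G: "G \<in> tpath_families t (m-t-1)" "F = insert p G" by auto
      have Gs: "G \<subseteq> tpaths t (m-t-1)" and Gd: "disjoint G" using G by (auto simp: tpath_families_def)
      have "\<forall>q\<in>G. q \<inter> p = {}"
      proof
        fix q assume "q \<in> G"
        hence "q \<subseteq> {1..m-t-1}" using Gs tpaths_sub by blast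
        thus "q \<inter> p = {}" using assms unfolding p_def by fastforce
      qed
      moreover have "G \<subseteq> tpaths t m" using Gs tpaths_mono[of "m-t-1" m t] by auto
      moreover have "disjoint (insert p G)" unfolding pairwise_insert using Gd \<open>\<forall>q\<in>G. q \<inter> p = {}\<close>
        by (auto simp: disjnt_def)
      ultimately show ?thesis using G(2) pin
        by (simp add: tpath_families_def)
    qed
  qed
qed

lemma U_rec:
  assumes "m \<ge> t + 1"
  shows "U t m = monom 1 1 * U t (m-1) - U t (m-t-1)"
proof -
  define p where "p = {m-t..m}"
  note sp = fam_split[OF assms, folded p_def]
  define g where "g F = monom ((-1::int) ^ card F) (m - (t + 1) * card F)" for F :: "nat set set"
  have "U t m = sum g (tpath_families t m)" by (simp add: U_def g_def)
  also have "\<dots> = sum g (tpath_families t (m-1)) + sum g (insert p ` tpath_families t (m-t-1))"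
    unfolding sp(1)
  proof (rule sum.union_disjoint)
    show "finite (tpath_families t (m-1))"
      by (rule finite_subset[of _ "Pow (tpaths t (m-1))"]) (auto simp: tpath_families_def finite_tpaths)
    show "finite (insert p ` tpath_families t (m-t-1))"
      by (rule finite_imageI, rule finite_subset[of _ "Pow (tpaths t (m-t-1))"]) (auto simp: tpath_families_def finite_tpaths)
    { fix F assume F1: "F \<in> tpath_families t (m-1)" and F2: "F \<in> insert p ` tpath_families t (m-t-1)"
      from F2 have "p \<in> F" by auto
      moreover have "F \<subseteq> tpaths t (m-1)" using F1 by (simp add: tpath_families_def)
      ultimately have False using sp(2) by auto }
    thus "tpath_families t (m-1) \<inter> insert p ` tpath_families t (m-t-1) = {}" by blast
  qed
  also have "sum g (insert p ` tpath_families t (m-t-1)) = sum (g \<circ> insert p) (tpath_families t (m-t-1))"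
  proof (rule sum.reindex)
    show "inj_on (insert p) (tpath_families t (m - t - 1))"
    proof (rule inj_onI)
      fix A B assume A: "A \<in> tpath_families t (m - t - 1)" and B: "B \<in> tpath_families t (m - t - 1)"
        and e: "insert p A = insert p B"
      have "p \<notin> A" using A sp(3) by (auto simp: tpath_families_def)
      moreover have "p \<notin> B" using B sp(3) by (auto simp: tpath_families_def)
      ultimately show "A = B" using e insert_ident by metis
    qed
  qed
  also have "sum (g \<circ> insert p) (tpath_families t (m-t-1)) = - U t (m-t-1)"
  proof -
    have "sum (g \<circ> insert p) (tpath_families t (m-t-1)) =
          (\<Sum>F\<in>tpath_families t (m-t-1). - monom ((-1) ^ card F) (m-t-1 - (t + 1) * card F))"
    proof (rule sum.cong[OF refl])
      fix F assume F: "F \<in> tpath_families t (m-t-1)"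
      have "p \<notin> F" using F sp(3) by (auto simp: tpath_families_def)
      hence c: "card (insert p F) = Suc (card F)" using fam_finite[OF F] by simp
      have e: "m - (t+1) * Suc (card F) = m-t-1 - (t + 1) * card F" by (simp add: algebra_simps)
      show "(g \<circ> insert p) F = - monom ((-1) ^ card F) (m-t-1 - (t + 1) * card F)"
        by (simp add: g_def c e minus_monom)
    qed
    thus ?thesis by (simp add: U_def sum_negf)
  qed
  also have "sum g (tpath_families t (m-1)) = monom 1 1 * U t (m-1)"
  proof -
    have "sum g (tpath_families t (m-1)) =
          (\<Sum>F\<in>tpath_families t (m-1). monom 1 1 * monom ((-1) ^ card F) (m-1 - (t + 1) * card F))"
    proof (rule sum.cong[OF refl])
      fix F assume F: "F \<in> tpath_families t (m-1)"
      have "(t+1) * card F \<le> m - 1" by (rule fam_bound[OF F])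
      hence e: "m - (t+1) * card F = Suc (m-1 - (t + 1) * card F)" using assms by simp
      show "g F = monom 1 1 * monom ((-1) ^ card F) (m-1 - (t + 1) * card F)"
        unfolding g_def e mult_monom by simp
    qed
    thus ?thesis by (simp add: U_def sum_distrib_left)
  qed
  finally show ?thesis by simp
qed




definition NC :: "nat \<Rightarrow> nat set \<Rightarrow> nat set set set" where
  "NC t A = {P. partition_on A P \<and> (\<forall>B\<in>P. card B = t + 1) \<and> noncrossing P}"

lemma mu_NC: "mu t m = card (NC t {1..m})" by (simp add: mu_def NC_def)

lemma finite_NC: "finite A \<Longrightarrow> finite (NC t A)"
  by (rule finite_subset[of _ "Pow (Pow A)"]) (auto simp: NC_def partition_on_def)

lemma NC_transfer:
  assumes bij: "bij_betw f A B" and ord: "\<And>x y. x \<in> A \<Longrightarrow> y \<in> A \<Longrightarrow> x < y \<longleftrightarrow> f x < f y"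
    and P: "P \<in> NC t A"
  shows "(`) f ` P \<in> NC t B"
proof -
  have part: "partition_on A P" and cardP: "\<forall>b\<in>P. card b = t + 1" and nc: "noncrossing P"
    using P by (auto simp: NC_def)
  have inj: "inj_on f A" and fA: "f ` A = B" using bij by (auto simp: bij_betw_def)
  have sub: "\<And>b. b \<in> P \<Longrightarrow> b \<subseteq> A" using part by (auto simp: partition_on_def)
  have ne: "{} \<notin> P" using part by (auto simp: partition_on_def)
  have "partition_on (f ` A) ((`) f ` P - {{}})" by (rule partition_on_inj_image[OF part inj])
  moreover have "(`) f ` P - {{}} = (`) f ` P" using ne by auto
  ultimately have p2: "partition_on B ((`) f ` P)" using fA by simp
  have c2: "\<forall>b\<in>(`) f ` P. card b = t + 1"
  proof
    fix b assume "b \<in> (`) f ` P"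
    then obtain b' where b': "b' \<in> P" "b = f ` b'" by auto
    have "card (f ` b') = card b'" by (rule card_image) (use inj_on_subset[OF inj sub[OF b'(1)]] in auto)
    thus "card b = t + 1" using b' cardP by simp
  qed
  have n2: "noncrossing ((`) f ` P)"
    unfolding noncrossing_def
  proof
    assume "\<exists>C\<in>(`) f ` P. \<exists>C'\<in>(`) f ` P. C \<noteq> C' \<and>
      (\<exists>a b c d. a < b \<and> b < c \<and> c < d \<and> a \<in> C \<and> c \<in> C \<and> b \<in> C' \<and> d \<in> C')"
    then obtain C1 C2 a b c d where C: "C1 \<in> P" "C2 \<in> P" "f ` C1 \<noteq> f ` C2"
      "a < b" "b < c" "c < d" "a \<in> f ` C1" "c \<in> f ` C1" "b \<in> f ` C2" "d \<in> f ` C2"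
      by blast
    obtain a' where a': "a' \<in> C1" "a = f a'" using C by auto
    obtain b' where b': "b' \<in> C2" "b = f b'" using C by auto
    obtain c' where c': "c' \<in> C1" "c = f c'" using C by auto
    obtain d' where d': "d' \<in> C2" "d = f d'" using C by auto
    have A: "a' \<in> A" "b' \<in> A" "c' \<in> A" "d' \<in> A" using a' b' c' d' C sub by auto
    have o1: "a' < b'" using ord[of a' b'] A a' b' C(4) by simp
    have o2: "b' < c'" using ord[of b' c'] A b' c' C(5) by simp
    have o3: "c' < d'" using ord[of c' d'] A c' d' C(6) by simp
    have ne: "C1 \<noteq> C2" using C(3) by auto
    have "\<exists>B\<in>P. \<exists>B'\<in>P. B \<noteq> B' \<and>
      (\<exists>a b c d. a < b \<and> b < c \<and> c < d \<and> a \<in> B \<and> c \<in> B \<and> b \<in> B' \<and> d \<in> B')"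
      apply (rule bexI[OF _ C(1)], rule bexI[OF _ C(2)])
      using ne o1 o2 o3 a'(1) b'(1) c'(1) d'(1) by blast
    thus False using nc unfolding noncrossing_def by blast
  qed
  show ?thesis using p2 c2 n2 by (simp add: NC_def)
qed

lemma NC_card_le:
  assumes bij: "bij_betw f A B" and ord: "\<And>x y. x \<in> A \<Longrightarrow> y \<in> A \<Longrightarrow> x < y \<longleftrightarrow> f x < f y"
    and fin: "finite B"
  shows "card (NC t A) \<le> card (NC t B)"
proof (rule card_inj_on_le)
  show "(`) ((`) f) ` NC t A \<subseteq> NC t B" using NC_transfer[OF bij ord] by blast
  show "finite (NC t B)" by (rule finite_NC[OF fin])
  have inj: "inj_on f A" using bij by (auto simp: bij_betw_def)
  have "inj_on ((`) f) (Pow A)" by (rule inj_on_image) (use inj in simp)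
  moreover have "\<Union> (NC t A) \<subseteq> Pow A" by (auto simp: NC_def partition_on_def)
  ultimately have "inj_on ((`) f) (\<Union> (NC t A))" by (rule inj_on_subset)
  thus "inj_on ((`) ((`) f)) (NC t A)" by (rule inj_on_image)
qed

lemma NC_card_eq:
  assumes bij: "bij_betw f A B" and ord: "\<And>x y. x \<in> A \<Longrightarrow> y \<in> A \<Longrightarrow> x < y \<longleftrightarrow> f x < f y"
    and finA: "finite A"
  shows "card (NC t A) = card (NC t B)"
proof (rule antisym)
  have finB: "finite B" using bij finA bij_betw_finite by blast
  show "card (NC t A) \<le> card (NC t B)" by (rule NC_card_le[OF bij ord finB])
  define g where "g = inv_into A f"
  have bg: "bij_betw g B A" unfolding g_def by (rule bij_betw_inv_into[OF bij])
  have fg: "\<And>x. x \<in> B \<Longrightarrow> f (g x) = x" unfolding g_def using bij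
    by (simp add: bij_betw_inv_into_right)
  have ordg: "x < y \<longleftrightarrow> g x < g y" if "x \<in> B" "y \<in> B" for x y
  proof -
    have "g x \<in> A" "g y \<in> A" using bg that by (auto simp: bij_betw_def)
    thus ?thesis using ord[of "g x" "g y"] fg that by simp
  qed
  show "card (NC t B) \<le> card (NC t A)" by (rule NC_card_le[OF bg ordg finA])
qed

lemma ord_iso_exists:
  fixes A :: "nat set"
  assumes "finite A"
  shows "\<exists>f. bij_betw f {1..card A} A \<and> (\<forall>x\<in>{1..card A}. \<forall>y\<in>{1..card A}. x < y \<longleftrightarrow> f x < f y)"
proof -
  define xs where "xs = sorted_list_of_set A"
  have sw: "sorted_wrt (<) xs" and setxs: "set xs = A" and len: "length xs = card A"
    and dis: "distinct xs"
    using assms by (auto simp: xs_def)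
  define f where "f i = xs ! (i - 1)" for i
  have mono: "f x < f y" if "x \<in> {1..card A}" "y \<in> {1..card A}" "x < y" for x y
    using that len unfolding f_def by (intro sorted_wrt_nth_less[OF sw]) auto
  have ord: "x < y \<longleftrightarrow> f x < f y" if "x \<in> {1..card A}" "y \<in> {1..card A}" for x y
    using mono[OF that] mono[OF that(2,1)] by (metis less_asym linorder_neqE_nat)
  have "bij_betw f {1..card A} A"
  proof (rule bij_betw_imageI)
    show "inj_on f {1..card A}"
      by (rule inj_onI) (metis ord less_irrefl linorder_neqE_nat)
    show "f ` {1..card A} = A"
    proof
      show "f ` {1..card A} \<subseteq> A" using setxs len by (auto simp: f_def)
      show "A \<subseteq> f ` {1..card A}"
      proof
        fix a assume "a \<in> A"
        then obtain i where i: "i < length xs" "xs ! i = a" using setxs by (auto simp: in_set_conv_nth)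
        hence "Suc i \<in> {1..card A}" "f (Suc i) = a" using len by (auto simp: f_def)
        thus "a \<in> f ` {1..card A}" by blast
      qed
    qed
  qed
  thus ?thesis using ord by blast
qed

lemma NC_card_mu:
  assumes "finite A"
  shows "card (NC t A) = mu t (card A)"
proof -
  obtain f where f: "bij_betw f {1..card A} A" "\<forall>x\<in>{1..card A}. \<forall>y\<in>{1..card A}. x < y \<longleftrightarrow> f x < f y"
    using ord_iso_exists[OF assms] by blast
  have "card (NC t {1..card A}) = card (NC t A)"
    by (rule NC_card_eq[OF f(1)]) (use f(2) in auto)
  thus ?thesis by (simp add: mu_NC)
qed




lemma sum_Pow_sign:
  assumes "finite S"
  shows "(\<Sum>F\<in>Pow S. (-1::int) ^ card F) = (if S = {} then 1 else 0)"
  using assms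
proof (induction S rule: finite_induct)
  case empty thus ?case by simp
next
  case (insert a S)
  have inj: "inj_on (insert a) (Pow S)"
    by (rule inj_onI) (use insert(2) in \<open>metis PowD subsetD insert_ident\<close>)
  have fin: "finite (Pow S)" using insert(1) by simp
  have "(\<Sum>F\<in>Pow (insert a S). (-1::int) ^ card F)
      = (\<Sum>F\<in>Pow S. (-1::int) ^ card F) + (\<Sum>F\<in>insert a ` Pow S. (-1::int) ^ card F)"
    unfolding Pow_insert
    by (rule sum.union_disjoint) (use fin insert(2) in auto)
  also have "(\<Sum>F\<in>insert a ` Pow S. (-1::int) ^ card F) = (\<Sum>F\<in>Pow S. (-1::int) ^ card (insert a F))"
    by (rule sum.reindex[OF inj, unfolded comp_def])
  also have "\<dots> = (\<Sum>F\<in>Pow S. - ((-1::int) ^ card F))"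
  proof (rule sum.cong[OF refl])
    fix F assume "F \<in> Pow S"
    hence "finite F" "a \<notin> F" using insert(1,2) finite_subset by auto
    thus "(-1::int) ^ card (insert a F) = - ((-1::int) ^ card F)" by simp
  qed
  finally show ?case by (simp add: sum_negf)
qed

lemma noncrossingD:
  assumes "noncrossing P" "B \<in> P" "B' \<in> P" "B \<noteq> B'" "a < b" "b < c" "c < d"
    "a \<in> B" "c \<in> B" "b \<in> B'" "d \<in> B'"
  shows False
proof -
  have h: "\<exists>a b c d. a < b \<and> b < c \<and> c < d \<and> a \<in> B \<and> c \<in> B \<and> b \<in> B' \<and> d \<in> B'"
    by (rule exI[of _ a], rule exI[of _ b], rule exI[of _ c], rule exI[of _ d]) (use assms in simp)
  have "\<exists>B\<in>P. \<exists>B'\<in>P. B \<noteq> B' \<and>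
     (\<exists>a b c d. a < b \<and> b < c \<and> c < d \<and> a \<in> B \<and> c \<in> B \<and> b \<in> B' \<and> d \<in> B')"
    by (rule bexI[OF _ assms(2)], rule bexI[OF _ assms(3)], rule conjI[OF assms(4) h])
  with assms(1) show False unfolding noncrossing_def by (rule notE)
qed

lemma noncrossingI:
  assumes "\<And>B B' a b c d. B \<in> P \<Longrightarrow> B' \<in> P \<Longrightarrow> B \<noteq> B' \<Longrightarrow> a < b \<Longrightarrow> b < c \<Longrightarrow> c < d
    \<Longrightarrow> a \<in> B \<Longrightarrow> c \<in> B \<Longrightarrow> b \<in> B' \<Longrightarrow> d \<in> B' \<Longrightarrow> False"
  shows "noncrossing P"
  unfolding noncrossing_def
  apply (rule notI)
  apply (elim bexE exE conjE)
  subgoal for B B' a b c d by (rule assms[of B B' a b c d]) assumption+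
  done

lemma noncrossing_subset:
  assumes nc: "noncrossing P" and sub: "Q \<subseteq> P" shows "noncrossing Q"
proof (rule noncrossingI)
  fix B B' a b c d assume H: "B \<in> Q" "B' \<in> Q" "B \<noteq> B'" "a < b" "b < c" "c < d"
    "a \<in> B" "c \<in> B" "b \<in> B'" "d \<in> B'"
  show False by (rule noncrossingD[OF nc subsetD[OF sub H(1)] subsetD[OF sub H(2)] H(3-10)])
qed

lemma noncrossing_union_intervals:
  assumes nc: "noncrossing Q" and dis: "disjoint (I \<union> Q)" and iv: "\<forall>B\<in>I. \<exists>i j. B = {i..j}"
  shows "noncrossing (I \<union> Q)"
proof (rule noncrossingI)
  fix B B' a b c d assume H: "B \<in> I \<union> Q" "B' \<in> I \<union> Q" "B \<noteq> B'"
    "a < b" "b < c" "c < d" "a \<in> B" "c \<in> B" "b \<in> B'" "d \<in> B'"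
  have dj: "B \<inter> B' = {}" using dis H(1-3) unfolding disjoint_def by blast
  show False
  proof (cases "B \<in> I")
    case True
    then obtain i j where "B = {i..j}" using iv by blast
    hence "b \<in> B" using H by auto
    thus False using dj H by auto
  next
    case False
    show False
    proof (cases "B' \<in> I")
      case True
      then obtain i j where "B' = {i..j}" using iv by blast
      hence "c \<in> B'" using H by auto
      thus False using dj H by auto
    next
      case F2: False
      have "B \<in> Q" "B' \<in> Q" using False F2 H by auto
      thus False using noncrossingD[OF nc _ _ H(3-10)] by blast
    qed
  qed
qed

lemma interval_block:
  assumes part: "partition_on {1..h} P" and nc: "noncrossing P" and h: "h > 0"
  shows "\<exists>B\<in>P. \<forall>x. Min B \<le> x \<and> x \<le> Max B \<longrightarrow> x \<in> B"
proof -
  have blk: "finite B" "B \<noteq> {}" "B \<subseteq> {1..h}" if "B \<in> P" for B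
  proof -
    show s: "B \<subseteq> {1..h}" using part that by (auto simp: partition_on_def)
    show "finite B" by (rule finite_subset[OF s]) simp
    show "B \<noteq> {}" using part that by (auto simp: partition_on_def)
  qed
  have "P \<noteq> {}" using part h by (auto simp: partition_on_def)
  then obtain B0 where "B0 \<in> P" by blast
  obtain B where B: "B \<in> P" and least: "\<And>B'. B' \<in> P \<Longrightarrow> Max B - Min B \<le> Max B' - Min B'"
    using ex_has_least_nat[of "\<lambda>B. B \<in> P" B0 "\<lambda>B. Max B - Min B"] \<open>B0 \<in> P\<close> by blast
  show ?thesis
  proof (rule ccontr)
    assume "\<not> ?thesis"
    then obtain x where x: "Min B \<le> x" "x \<le> Max B" "x \<notin> B" using B by blast
    have mB: "Min B \<in> B" "Max B \<in> B" using blk[OF B] by auto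
    have xr: "Min B < x" "x < Max B" using x mB by (auto simp: le_less)
    have "x \<in> {1..h}" using mB blk(3)[OF B] x by force
    then obtain B' where B': "B' \<in> P" "x \<in> B'" using partition_onD1[OF part] by (metis UnionE)
    have ne: "B \<noteq> B'" using B' x by auto
    have dj: "B \<inter> B' = {}" using partition_onD2[OF part] B B'(1) ne unfolding disjoint_def by blast
    have inside: "Min B < y \<and> y < Max B" if y: "y \<in> B'" for y
    proof -
      have "y \<noteq> Min B" "y \<noteq> Max B" using dj y mB by blast+
      moreover have "\<not> y < Min B"
      proof
        assume "y < Min B"
        show False by (rule noncrossingD[OF nc B'(1) B ne[symmetric] \<open>y < Min B\<close> xr y B'(2) mB])
      qed
      moreover have "\<not> y > Max B"
      proof
        assume "y > Max B"
        show False by (rule noncrossingD[OF nc B B'(1) ne xr(1) xr(2) \<open>y > Max B\<close> mB(1) mB(2) B'(2) y])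
      qed
      ultimately show ?thesis by linarith
    qed
    have mB': "Min B' \<in> B'" "Max B' \<in> B'" using blk[OF B'(1)] by auto
    have "Max B' - Min B' < Max B - Min B"
      using inside[OF mB'(1)] inside[OF mB'(2)] by linarith
    thus False using least[OF B'(1)] by linarith
  qed
qed

lemma interval_block_tpath:
  assumes "P \<in> NC t {1..h}" and "h > 0"
  shows "P \<inter> tpaths t h \<noteq> {}"
proof -
  have part: "partition_on {1..h} P" and c: "\<forall>B\<in>P. card B = t + 1" and nc: "noncrossing P"
    using assms by (auto simp: NC_def)
  obtain B where B: "B \<in> P" and conv: "\<forall>x. Min B \<le> x \<and> x \<le> Max B \<longrightarrow> x \<in> B"
    using interval_block[OF part nc assms(2)] by blast
  have fin3: "B \<subseteq> {1..h}" using part B by (auto simp: partition_on_def)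
  have fin1: "finite B" by (rule finite_subset[OF fin3]) simp
  have fin2: "B \<noteq> {}" using partition_onD3[OF part] B by metis
  note fin = fin1 fin2 fin3
  have eq: "B = {Min B..Max B}"
  proof (intro equalityI subsetI)
    fix x assume "x \<in> B" thus "x \<in> {Min B..Max B}" using Min_le[OF fin1] Max_ge[OF fin1] by simp
  next
    fix x assume "x \<in> {Min B..Max B}" thus "x \<in> B" using conv by simp
  qed
  have mm: "Min B \<le> Max B" using fin by simp
  have "card {Min B..Max B} = Suc (Max B) - Min B" by simp
  hence "Suc (Max B) - Min B = t + 1" using eq c B by metis
  hence mx: "Max B = Min B + t" using mm by linarith
  have m1: "Min B \<in> B" "Max B \<in> B" using fin by auto
  have "Min B \<ge> 1" "Max B \<le> h" using m1 fin(3) by (meson atLeastAtMost_iff subsetD)+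
  hence "B \<in> tpaths t h" unfolding tpaths_def
    by (intro CollectI exI[of _ "Min B"]) (use eq mx in simp)
  thus ?thesis using B by blast
qed




lemma tpaths_ne: "q \<in> tpaths t h \<Longrightarrow> q \<noteq> {}"
  by (auto simp: tpaths_def)

lemma tpaths_iv: "q \<in> tpaths t h \<Longrightarrow> \<exists>i j. q = {i..j}"
  by (auto simp: tpaths_def)

lemma combine:
  assumes F: "F \<in> tpath_families t h" and P': "P' \<in> NC t ({1..h} - \<Union>F)"
  shows "F \<union> P' \<in> NC t {1..h}" and "F \<inter> P' = {}"
proof -
  have Fs: "F \<subseteq> tpaths t h" and Fd: "disjoint F" using F by (auto simp: tpath_families_def)
  have pp: "partition_on ({1..h} - \<Union>F) P'" and pc: "\<forall>b\<in>P'. card b = t + 1" and pn: "noncrossing P'"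
    using P' by (auto simp: NC_def)
  have UF: "\<Union>F \<subseteq> {1..h}" using fam_card_Union(2)[OF F] .
  have UP': "\<Union>P' = {1..h} - \<Union>F" using partition_onD1[OF pp] by simp
  show dj: "F \<inter> P' = {}"
  proof (rule ccontr)
    assume "F \<inter> P' \<noteq> {}"
    then obtain b where b: "b \<in> F" "b \<in> P'" by blast
    have "b \<noteq> {}" using partition_onD3[OF pp] b(2) by metis
    moreover have "b \<subseteq> \<Union>F" using b(1) by blast
    moreover have "b \<subseteq> {1..h} - \<Union>F" using b(2) UP' by blast
    ultimately show False by blast
  qed
  have U: "\<Union>(F \<union> P') = {1..h}" using UF UP' by blast
  have D: "disjoint (F \<union> P')"
    by (rule disjoint_union[OF Fd partition_onD2[OF pp]]) (use UP' in blast)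
  have E: "{} \<notin> F \<union> P'" using partition_onD3[OF pp] Fs tpaths_ne by blast
  have part: "partition_on {1..h} (F \<union> P')" unfolding partition_on_def using U D E by blast
  have crd: "\<forall>b\<in>F \<union> P'. card b = t + 1" using pc Fs tpaths_card by blast
  have nc: "noncrossing (F \<union> P')"
    by (rule noncrossing_union_intervals[OF pn D]) (use Fs tpaths_iv in blast)
  show "F \<union> P' \<in> NC t {1..h}" unfolding NC_def using part crd nc by blast
qed

lemma split:
  assumes P: "P \<in> NC t {1..h}" and F: "F \<subseteq> P \<inter> tpaths t h"
  shows "F \<in> tpath_families t h" and "P - F \<in> NC t ({1..h} - \<Union>F)"
proof -
  have pp: "partition_on {1..h} P" and pc: "\<forall>b\<in>P. card b = t + 1" and pn: "noncrossing P"
    using P by (auto simp: NC_def)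
  have Pd: "disjoint P" by (rule partition_onD2[OF pp])
  have FP: "F \<subseteq> P" using F by blast
  have "disjoint F" by (rule pairwise_subset[OF Pd FP])
  thus "F \<in> tpath_families t h" using F unfolding tpath_families_def by blast
  have UP: "\<Union>P = {1..h}" using partition_onD1[OF pp] by simp
  have U: "\<Union>(P - F) = {1..h} - \<Union>F"
  proof (intro equalityI subsetI)
    fix x assume "x \<in> \<Union>(P - F)"
    then obtain b where b: "b \<in> P" "b \<notin> F" "x \<in> b" by blast
    have "x \<notin> \<Union>F"
    proof
      assume "x \<in> \<Union>F"
      then obtain b' where b': "b' \<in> F" "x \<in> b'" by blast
      have "b' \<in> P" "b' \<noteq> b" using b' FP b by auto
      hence "b \<inter> b' = {}" using Pd b(1) unfolding disjoint_def by blast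
      thus False using b b' by blast
    qed
    moreover have "x \<in> {1..h}" using b UP by blast
    ultimately show "x \<in> {1..h} - \<Union>F" by blast
  next
    fix x assume x: "x \<in> {1..h} - \<Union>F"
    then obtain b where b: "b \<in> P" "x \<in> b" using UP by blast
    have "b \<notin> F" using x b by blast
    thus "x \<in> \<Union>(P - F)" using b by blast
  qed
  have D: "disjoint (P - F)" by (rule pairwise_subset[OF Pd]) blast
  have E: "{} \<notin> P - F" using partition_onD3[OF pp] by blast
  have part: "partition_on ({1..h} - \<Union>F) (P - F)" unfolding partition_on_def using U D E by blast
  have nc: "noncrossing (P - F)" by (rule noncrossing_subset[OF pn]) blast
  show "P - F \<in> NC t ({1..h} - \<Union>F)" unfolding NC_def using part pc nc by blast
qed

lemma finite_fams: "finite (tpath_families t h)"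
  by (rule finite_subset[of _ "Pow (tpaths t h)"]) (auto simp: tpath_families_def finite_tpaths)

lemma L_U: "L t (U t h) = (if h = 0 then 1 else 0)"
proof -
  define fams where "fams = tpath_families t h"
  define X where "X F = NC t ({1..h} - \<Union>F)" for F
  define S where "S = Sigma fams X"
  define T where "T = Sigma (NC t {1..h}) (\<lambda>P. Pow (P \<inter> tpaths t h))"
  have finf: "finite fams" unfolding fams_def by (rule finite_fams)
  have finX: "finite (X F)" for F unfolding X_def by (rule finite_NC) simp
  have "L t (U t h) = (\<Sum>F\<in>fams. (-1) ^ card F * int (mu t (h - (t + 1) * card F)))"
    by (simp add: U_def L_sum L_monom fams_def)
  also have "\<dots> = (\<Sum>F\<in>fams. (\<Sum>P'\<in>X F. (-1::int) ^ card F))"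
  proof (rule sum.cong[OF refl])
    fix F assume F: "F \<in> fams"
    have UF: "\<Union>F \<subseteq> {1..h}" using fam_card_Union(2)[OF F[unfolded fams_def]] .
    have finU: "finite (\<Union>F)" by (rule finite_subset[OF UF]) simp
    have "card ({1..h} - \<Union>F) = h - (t + 1) * card F"
      using card_Diff_subset[OF finU UF] fam_card_Union(1)[OF F[unfolded fams_def]] by simp
    hence "card (X F) = mu t (h - (t + 1) * card F)"
      unfolding X_def using NC_card_mu[of "{1..h} - \<Union>F" t] by simp
    thus "(-1) ^ card F * int (mu t (h - (t + 1) * card F)) = (\<Sum>P'\<in>X F. (-1::int) ^ card F)"
      by simp
  qed
  also have "\<dots> = (\<Sum>(F, P')\<in>S. (-1::int) ^ card F)"
    unfolding S_def by (rule sum.Sigma[OF finf]) (use finX in blast)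
  also have "\<dots> = (\<Sum>(P, F)\<in>T. (-1::int) ^ card F)"
  proof (rule sum.reindex_bij_witness[where i = "\<lambda>(P, F). (F, P - F)" and j = "\<lambda>(F, P'). (F \<union> P', F)"])
    fix a assume a: "a \<in> S"
    obtain F P' where aa: "a = (F, P')" by (cases a)
    have F: "F \<in> tpath_families t h" and P': "P' \<in> NC t ({1..h} - \<Union>F)"
      using a aa unfolding S_def X_def fams_def by auto
    show "(case (case a of (F, P') \<Rightarrow> (F \<union> P', F)) of (P, F) \<Rightarrow> (F, P - F)) = a"
      using combine(2)[OF F P'] aa by auto
    have "F \<union> P' \<in> NC t {1..h}" by (rule combine(1)[OF F P'])
    moreover have "F \<subseteq> (F \<union> P') \<inter> tpaths t h" using F unfolding tpath_families_def by blast
    ultimately show "(case a of (F, P') \<Rightarrow> (F \<union> P', F)) \<in> T" unfolding T_def aa by simp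
    show "(case (case a of (F, P') \<Rightarrow> (F \<union> P', F)) of (P, F) \<Rightarrow> (-1::int) ^ card F) =
          (case a of (F, P') \<Rightarrow> (-1) ^ card F)" unfolding aa by simp
  next
    fix b assume b: "b \<in> T"
    obtain P F where bb: "b = (P, F)" by (cases b)
    have P: "P \<in> NC t {1..h}" and F: "F \<subseteq> P \<inter> tpaths t h" using b bb unfolding T_def by auto
    show "(case (case b of (P, F) \<Rightarrow> (F, P - F)) of (F, P') \<Rightarrow> (F \<union> P', F)) = b"
      using F bb by auto
    show "(case b of (P, F) \<Rightarrow> (F, P - F)) \<in> S"
      using split[OF P F] unfolding bb S_def X_def fams_def by simp
  qed
  also have "\<dots> = (\<Sum>P\<in>NC t {1..h}. \<Sum>F\<in>Pow (P \<inter> tpaths t h). (-1::int) ^ card F)"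
    unfolding T_def by (rule sum.Sigma[symmetric]) (auto intro: finite_NC finite_tpaths)
  also have "\<dots> = (\<Sum>P\<in>NC t {1..h}. (if P \<inter> tpaths t h = {} then 1 else 0))"
    by (rule sum.cong[OF refl], rule sum_Pow_sign) (meson finite_Int finite_tpaths)
  also have "\<dots> = (if h = 0 then 1 else 0)"
  proof (cases "h = 0")
    case True
    have "NC t {1..h} = {{}}" using True
      by (auto simp: NC_def partition_on_empty noncrossing_def)
    thus ?thesis using True by simp
  next
    case False
    thus ?thesis using interval_block_tpath[of _ t h] by simp
  qed
  finally show ?thesis .
qed




lemma xU: "monom 1 1 * U t h = U t (h+1) + (if h \<ge> t then U t (h-t) else 0)"
proof (cases "h \<ge> t")
  case True
  have "U t (h+1) = monom 1 1 * U t (h+1-1) - U t (h+1-t-1)" by (rule U_rec) (use True in simp)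
  moreover have "h+1-1 = h" "h+1-t-1 = h-t" using True by auto
  ultimately show ?thesis using True by simp
next
  case False
  hence "U t h = monom 1 h" "U t (h+1) = monom 1 (h+1)" by (auto intro: U_small)
  thus ?thesis using False by (simp add: mult_monom)
qed

lemma key: "\<forall>m. (k*t < m \<longrightarrow> L t (monom 1 k * U t m) = 0) \<and> (m = k*t \<longrightarrow> L t (monom 1 k * U t m) = 1)"
proof (induction k)
  case 0
  show ?case by (simp add: L_U monom_0 one_pCons[symmetric])
next
  case (Suc k)
  show ?case
  proof (intro allI conjI impI)
    fix m
    have e: "monom 1 (Suc k) * U t m = monom 1 k * U t (m+1) + (if m \<ge> t then monom 1 k * U t (m-t) else 0)"
    proof -
      have "monom 1 (Suc k) * U t m = monom 1 k * (monom 1 1 * U t m)"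
        by (simp add: mult_monom mult.assoc[symmetric])
      also have "\<dots> = monom 1 k * (U t (m+1) + (if m \<ge> t then U t (m-t) else 0))"
        by (simp only: xU)
      also have "\<dots> = monom 1 k * U t (m+1) + (if m \<ge> t then monom 1 k * U t (m-t) else 0)"
        by (simp add: distrib_left)
      finally show ?thesis .
    qed
    { assume m: "Suc k * t < m"
      have a: "L t (monom 1 k * U t (m+1)) = 0" using Suc m by simp
      have "m \<ge> t" "k * t < m - t" using m by auto
      hence b: "L t (monom 1 k * U t (m-t)) = 0" using Suc by simp
      show "L t (monom 1 (Suc k) * U t m) = 0" unfolding e using a b \<open>m \<ge> t\<close> by (simp add: L_add)
    }
    { assume m: "m = Suc k * t"
      have a: "L t (monom 1 k * U t (m+1)) = 0" using Suc m by simp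
      have "m \<ge> t" "m - t = k * t" using m by auto
      hence b: "L t (monom 1 k * U t (m-t)) = 1" using Suc by simp
      show "L t (monom 1 (Suc k) * U t m) = 1" unfolding e using a b \<open>m \<ge> t\<close> by (simp add: L_add)
    }
  qed
qed

lemma U_deg: "degree (U t n) \<le> n \<and> coeff (U t n) n = 1"
proof (induction n rule: less_induct)
  case (less n)
  show ?case
  proof (cases "n \<le> t")
    case True
    thus ?thesis by (simp add: U_small degree_monom_le)
  next
    case False
    hence n: "n \<ge> t + 1" by simp
    have r: "U t n = monom 1 1 * U t (n-1) - U t (n-t-1)" by (rule U_rec[OF n])
    have i1: "degree (U t (n-1)) \<le> n - 1" "coeff (U t (n-1)) (n-1) = 1" using less[of "n-1"] n by auto
    have i2: "degree (U t (n-t-1)) \<le> n-t-1" using less[of "n-t-1"] n by auto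
    have x: "monom 1 1 * p = pCons 0 p" for p :: "int poly"
      by (simp add: monom_Suc monom_0)
    have d1: "degree (pCons 0 (U t (n-1))) \<le> n" using degree_pCons_le[of 0 "U t (n-1)"] i1(1) n
      by linarith
    have "degree (U t n) \<le> n" unfolding r x
      by (rule order.trans[OF degree_diff_le_max]) (use d1 i2 in auto)
    moreover have "coeff (U t n) n = 1"
    proof -
      have "coeff (pCons 0 (U t (n-1))) n = coeff (U t (n-1)) (n-1)"
        using n by (cases n) auto
      moreover have "coeff (U t (n-t-1)) n = 0" by (rule coeff_eq_0) (use i2 n in linarith)
      ultimately show ?thesis unfolding r x using i1 by simp
    qed
    ultimately show ?thesis by blast
  qed
qed

lemma L_prod_expand:
  "L t (U t m * U t n) = (\<Sum>j\<le>n. coeff (U t n) j * L t (monom 1 j * U t m))"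
proof -
  have "U t n = (\<Sum>j\<le>n. monom (coeff (U t n) j) j)"
    by (rule poly_as_sum_of_monoms'[symmetric]) (use U_deg in blast)
  hence "U t m * U t n = U t m * (\<Sum>j\<le>n. monom (coeff (U t n) j) j)"
    by (rule arg_cong)
  also have "\<dots> = (\<Sum>j\<le>n. smult (coeff (U t n) j) (monom 1 j * U t m))"
    unfolding sum_distrib_left
  proof (rule sum.cong[OF refl])
    fix j
    have "monom (coeff (U t n) j) j = smult (coeff (U t n) j) (monom 1 j)" by (simp add: smult_monom)
    thus "U t m * monom (coeff (U t n) j) j = smult (coeff (U t n) j) (monom 1 j * U t m)"
      by (simp add: mult.commute)
  qed
  finally have "U t m * U t n = (\<Sum>j\<le>n. smult (coeff (U t n) j) (monom 1 j * U t m))" .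
  thus ?thesis by (simp add: L_sum L_smult)
qed

theorem mainTheorem2:
  fixes t :: nat
  assumes "t \<ge> 1"
  shows "(\<forall>n m. m > n * t \<longrightarrow> L t (U t m * U t n) = 0) \<and>
         (\<forall>n. L t (U t (n * t) * U t n) = 1)"
proof (intro conjI allI impI)
  fix n m assume m: "m > n * t"
  have "\<forall>j\<in>{..n}. L t (monom 1 j * U t m) = 0"
  proof
    fix j assume "j \<in> {..n}"
    hence "j * t < m" using m by (meson atMost_iff le_less_trans mult_le_mono1)
    thus "L t (monom 1 j * U t m) = 0" using key[of j t] by blast
  qed
  thus "L t (U t m * U t n) = 0" by (simp add: L_prod_expand)
next
  fix n
  have z: "\<forall>j\<in>{..<n}. L t (monom 1 j * U t (n*t)) = 0"
  proof
    fix j assume "j \<in> {..<n}"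
    hence "j * t < n * t" using assms by simp
    thus "L t (monom 1 j * U t (n*t)) = 0" using key[of j t] by blast
  qed
  have o: "L t (monom 1 n * U t (n*t)) = 1" using key[of n t] by blast
  have "L t (U t (n * t) * U t n) = (\<Sum>j<Suc n. coeff (U t n) j * L t (monom 1 j * U t (n*t)))"
    by (simp add: L_prod_expand lessThan_Suc_atMost)
  also have "\<dots> = coeff (U t n) n * L t (monom 1 n * U t (n*t))"
    using z by simp
  also have "\<dots> = 1" using o U_deg[of t n] by simp
  finally show "L t (U t (n * t) * U t n) = 1" .
qed


end
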